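(* For $1\le t\le N$, under the standing assumptions, if $\gamma<\frac1{\alpha_B\mathrm{tr}(\mathbf H^{(q)})}$ then $$\mathcal M_B^{(q)}\circ\mathbf S_t\preceq\frac{\alpha_B\,\mathrm{tr}\big([\mathcal I-(\mathcal I-\gamma\widetilde{\mathcal T}^{(q)})^t]\circ\mathbf B_0\big)}{\gamma(1-\gamma\alpha_B\mathrm{tr}(\mathbf H^{(q)}))}\,\mathbf H^{(q)}.$$
   Context: $\mathbf H^{(q)}=\mathbb E[\mathcal Q_d(\mathbf x)\mathcal Q_d(\mathbf x)^\top]$ (positive definite, finite trace), where $\mathcal Q_d$ is an unbiased random data quantizer; $\mathbf X^{(q)}=\mathcal Q_d(\mathbf X)$ for a batch $\mathbf X$ of $B$ i.i.d. samples, each row quantized independently. Linear operators on symmetric matrices $\mathbf A$: $\mathcal I\circ\mathbf A=\mathbf A$; $\mathcal M_B^{(q)}\circ\mathbf A=\mathbb E[\frac1{B^2}\mathbf X^{(q)\top}\mathbf X^{(q)}\mathbf A\mathbf X^{(q)\top}\mathbf X^{(q)}]$; $\mathcal T_B^{(q)}$ defined by $(\mathcal I-\gamma\mathcal T_B^{(q)})\circ\mathbf A=\mathbb E[(\mathbf I-\frac{\gamma}{B}\mathbf X^{(q)\top}\mathbf X^{(q)})\mathbf A(\mathbf I-\frac{\gamma}{B}\mathbf X^{(q)\top}\mathbf X^{(q)})]$; $\widetilde{\mathcal T}^{(q)}$ defined by $(\mathcal I-\gamma\widetilde{\mathcal T}^{(q)})\circ\mathbf A=(\mathbf I-\gamma\mathbf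 H^{(q)})\mathbf A(\mathbf I-\gamma\mathbf H^{(q)})$. Fourth-moment assumption: for all PSD $\mathbf A$, $\mathcal M_B^{(q)}\circ\mathbf A\preceq\alpha_B\mathrm{tr}(\mathbf H^{(q)}\mathbf A)\mathbf H^{(q)}$. $\mathbf B_0=\mathbb E[\boldsymbol\eta_0\otimes\boldsymbol\eta_0]$ with $\boldsymbol\eta_0=\mathbf w_0-\mathbf w^{(q)*}$, $\mathbf B_t=(\mathcal I-\gamma\mathcal T_B^{(q)})^t\circ\mathbf B_0$, $\mathbf S_t=\sum_{k=0}^{t-1}\mathbf B_k$. *)

theory Defs
  imports "HOL-Analysis.Analysis" "HOL-Probability.Probability"
begin

definition psd :: "real^'n^'n \<Rightarrow> bool" where
  "psd A \<longleftrightarrow> transpose A = A \<and> (\<forall>x. 0 \<le> x \<bullet> (A *v x))"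

definition pos_def :: "real^'n^'n \<Rightarrow> bool" where
  "pos_def A \<longleftrightarrow> transpose A = A \<and> (\<forall>x. x \<noteq> 0 \<longrightarrow> 0 < x \<bullet> (A *v x))"

definition loewner_le :: "real^'n^'n \<Rightarrow> real^'n^'n \<Rightarrow> bool" (infix "\<preceq>\<^sub>L" 50) where
  "A \<preceq>\<^sub>L B \<longleftrightarrow> psd (B - A)"

definition outer :: "real^'n \<Rightarrow> real^'n \<Rightarrow> real^'n^'n" where
  "outer u v = (\<chi> i j. u $ i * v $ j)"

definition mat_expect :: "'a measure \<Rightarrow> ('a \<Rightarrow> real^'n^'m) \<Rightarrow> real^'n^'m" where
  "mat_expect M F = (\<chi> i j. \<integral>\<omega>. F \<omega> $ i $ j \<partial>M)"

text \<open>Batch size B = CARD('b); the quantized batch X^(q) : \<omega> \<mapsto> real^'n^'b (rows = samples).\<close>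
definition gram :: "real^'n^'b \<Rightarrow> real^'n^'n" where
  "gram X = transpose X ** X"

definition M_op :: "'a measure \<Rightarrow> ('a \<Rightarrow> real^'n^'b::finite) \<Rightarrow> real^'n^'n \<Rightarrow> real^'n^'n" where
  "M_op M Xq A = mat_expect M (\<lambda>\<omega>. (1 / (real CARD('b))^2) *\<^sub>R (gram (Xq \<omega>) ** A ** gram (Xq \<omega>)))"

definition IT_op :: "'a measure \<Rightarrow> ('a \<Rightarrow> real^'n^'b::finite) \<Rightarrow> real \<Rightarrow> real^'n^'n \<Rightarrow> real^'n^'n" where
  "IT_op M Xq \<gamma> A = mat_expect M (\<lambda>\<omega>.
     (mat 1 - (\<gamma> / real CARD('b)) *\<^sub>R gram (Xq \<omega>)) ** A ** (mat 1 - (\<gamma> / real CARD('b)) *\<^sub>R gram (Xq \<omega>)))"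

definition ITt_op :: "real^'n^'n \<Rightarrow> real \<Rightarrow> real^'n^'n \<Rightarrow> real^'n^'n" where
  "ITt_op H \<gamma> A = (mat 1 - \<gamma> *\<^sub>R H) ** A ** (mat 1 - \<gamma> *\<^sub>R H)"

definition B_iter :: "'a measure \<Rightarrow> ('a \<Rightarrow> real^'n^'b::finite) \<Rightarrow> real \<Rightarrow> real^'n^'n \<Rightarrow> nat \<Rightarrow> real^'n^'n" where
  "B_iter M Xq \<gamma> B0 t = (IT_op M Xq \<gamma> ^^ t) B0"

definition S_sum :: "'a measure \<Rightarrow> ('a \<Rightarrow> real^'n^'b::finite) \<Rightarrow> real \<Rightarrow> real^'n^'n \<Rightarrow> nat \<Rightarrow> real^'n^'n" where
  "S_sum M Xq \<gamma> B0 t = (\<Sum>k<t. B_iter M Xq \<gamma> B0 k)"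

end

theory Submission
  imports Defs
begin

lemma quad_eq: "x \<bullet> (A *v x) = (\<Sum>i\<in>UNIV. \<Sum>j\<in>UNIV. x$i * A$i$j * x$j)"
  by (simp add: inner_vec_def matrix_vector_mult_def sum_distrib_left mult.assoc)

lemma inner_transpose: "x \<bullet> (transpose C *v y) = (C *v x) \<bullet> (y :: real^'n)"
proof -
  have "x \<bullet> (transpose C *v y) = (\<Sum>i\<in>UNIV. \<Sum>j\<in>UNIV. x$i * (C$j$i * y$j))"
    by (simp add: inner_vec_def matrix_vector_mult_def transpose_def sum_distrib_left)
  also have "\<dots> = (\<Sum>j\<in>UNIV. \<Sum>i\<in>UNIV. x$i * (C$j$i * y$j))"
    by (rule sum.swap)
  also have "\<dots> = (C *v x) \<bullet> y"
    by (simp add: inner_vec_def matrix_vector_mult_def sum_distrib_right sum_distrib_left mult_ac)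
  finally show ?thesis .
qed

lemma psd_congr:
  assumes "psd A" shows "psd (transpose C ** A ** C)"
proof -
  have "x \<bullet> ((transpose C ** A ** C) *v x) = (C *v x) \<bullet> (A *v (C *v x))" for x
    by (simp only: matrix_vector_mul_assoc[symmetric] inner_transpose)
  then show ?thesis using assms unfolding psd_def
    by (simp add: matrix_transpose_mul matrix_mul_assoc)
qed

lemma transpose_add': "transpose (A + B) = transpose A + transpose (B::real^'n^'m)"
  by (simp add: vec_eq_iff transpose_def)
lemma transpose_diff': "transpose (A - B) = transpose A - transpose (B::real^'n^'m)"
  by (simp add: vec_eq_iff transpose_def)
lemma transpose_zero': "transpose (0::real^'n^'m) = 0"
  by (simp add: vec_eq_iff transpose_def)

lemma psd_add: "psd A \<Longrightarrow> psd B \<Longrightarrow> psd (A + B)"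
  unfolding psd_def by (simp add: matrix_vector_mult_add_rdistrib inner_add_right transpose_add')

lemma psd_scale: "psd A \<Longrightarrow> 0 \<le> c \<Longrightarrow> psd (c *\<^sub>R A)"
proof -
  assume a: "psd A" "0 \<le> c"
  have "x \<bullet> ((c *\<^sub>R A) *v x) = c * (x \<bullet> (A *v x))" for x
    by (simp add: quad_eq sum_distrib_left mult_ac)
  then show ?thesis using a unfolding psd_def by (simp add: transpose_scalar)
qed

lemma psd_zero: "psd (0::real^'n^'n)"
  unfolding psd_def by (simp add: transpose_zero')

lemma loewner_trans: "A \<preceq>\<^sub>L B \<Longrightarrow> B \<preceq>\<^sub>L C \<Longrightarrow> A \<preceq>\<^sub>L C"
  unfolding loewner_le_def using psd_add[of "B - A" "C - B"] by simp

lemma psd_diag: "psd A \<Longrightarrow> 0 \<le> A $ i $ i"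
proof -
  assume "psd A"
  then have "0 \<le> axis i 1 \<bullet> (A *v axis i 1)" unfolding psd_def by blast
  moreover have "axis i 1 \<bullet> (A *v axis i 1) = A$i$i"
    unfolding inner_axis' by (simp add: matrix_vector_mult_def axis_def if_distrib[of "\<lambda>u. _ * u"] cong: if_cong)
  ultimately show ?thesis by simp
qed

lemma trace_psd_nonneg: "psd A \<Longrightarrow> 0 \<le> trace A"
  unfolding trace_def by (intro sum_nonneg psd_diag)

definition mint :: "'a measure \<Rightarrow> ('a \<Rightarrow> real^'n^'m) \<Rightarrow> bool" where
  "mint M F \<longleftrightarrow> (\<forall>i j. integrable M (\<lambda>\<omega>. F \<omega> $ i $ j))"

lemma mint_add: "mint M F \<Longrightarrow> mint M G \<Longrightarrow> mint M (\<lambda>\<omega>. F \<omega> + G \<omega>)"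
  unfolding mint_def by auto
lemma mint_diff: "mint M F \<Longrightarrow> mint M G \<Longrightarrow> mint M (\<lambda>\<omega>. F \<omega> - G \<omega>)"
  unfolding mint_def by auto
lemma mint_scale: "mint M F \<Longrightarrow> mint M (\<lambda>\<omega>. c *\<^sub>R F \<omega>)"
  unfolding mint_def by auto
lemma mint_const: "finite_measure M \<Longrightarrow> mint M (\<lambda>\<omega>. A)"
  unfolding mint_def by (auto intro: finite_measure.integrable_const)
lemma mint_lmul: "mint M F \<Longrightarrow> mint M (\<lambda>\<omega>. A ** F \<omega>)"
  unfolding mint_def matrix_matrix_mult_def by auto
lemma mint_rmul: "mint M F \<Longrightarrow> mint M (\<lambda>\<omega>. F \<omega> ** A)"
  unfolding mint_def matrix_matrix_mult_def by auto

lemma me_add: "mint M F \<Longrightarrow> mint M G \<Longrightarrow> mat_expect M (\<lambda>\<omega>. F \<omega> + G \<omega>) = mat_expect M F + mat_expect M G"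
  unfolding mint_def mat_expect_def by (simp add: vec_eq_iff)
lemma me_diff: "mint M F \<Longrightarrow> mint M G \<Longrightarrow> mat_expect M (\<lambda>\<omega>. F \<omega> - G \<omega>) = mat_expect M F - mat_expect M G"
  unfolding mint_def mat_expect_def by (simp add: vec_eq_iff)
lemma me_scale: "mat_expect M (\<lambda>\<omega>. c *\<^sub>R F \<omega>) = c *\<^sub>R mat_expect M F"
  unfolding mat_expect_def by (simp add: vec_eq_iff)
lemma me_const: "prob_space M \<Longrightarrow> mat_expect M (\<lambda>\<omega>. A) = A"
  unfolding mat_expect_def by (simp add: vec_eq_iff prob_space.prob_space)
lemma me_lmul: "mint M F \<Longrightarrow> mat_expect M (\<lambda>\<omega>. A ** F \<omega>) = A ** mat_expect M F"
  unfolding mint_def mat_expect_def by (simp add: vec_eq_iff matrix_matrix_mult_def)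
lemma me_rmul: "mint M F \<Longrightarrow> mat_expect M (\<lambda>\<omega>. F \<omega> ** A) = mat_expect M F ** A"
  unfolding mint_def mat_expect_def by (simp add: vec_eq_iff matrix_matrix_mult_def)

lemma me_quad: "mint M F \<Longrightarrow> x \<bullet> (mat_expect M F *v x) = (\<integral>\<omega>. x \<bullet> (F \<omega> *v x) \<partial>M)"
  unfolding mint_def mat_expect_def
  by (simp add: inner_vec_def matrix_vector_mult_def sum_distrib_left)

lemma me_psd: assumes "mint M F" "\<And>\<omega>. psd (F \<omega>)" shows "psd (mat_expect M F)"
proof -
  have "transpose (mat_expect M F) = mat_expect M F"
  proof -
    have "F \<omega> $ j $ i = F \<omega> $ i $ j" for \<omega> i j
      using assms(2)[of \<omega>] unfolding psd_def by (metis transpose_def vec_lambda_beta)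
    then show ?thesis unfolding mat_expect_def transpose_def by (simp add: vec_eq_iff)
  qed
  moreover have "0 \<le> x \<bullet> (mat_expect M F *v x)" for x
    unfolding me_quad[OF assms(1)] using assms(2) unfolding psd_def by (simp add: integral_nonneg)
  ultimately show ?thesis unfolding psd_def by blast
qed

lemma trace_me_outer_nonneg:
  assumes K: "psd K" and int: "\<And>i j. integrable P (\<lambda>\<omega>. v \<omega> $ i * v \<omega> $ j)"
  shows "0 \<le> trace (K ** mat_expect P (\<lambda>\<omega>. outer (v \<omega>) (v \<omega>)))"
proof -
  have "trace (K ** mat_expect P (\<lambda>\<omega>. outer (v \<omega>) (v \<omega>))) = (\<integral>\<omega>. v \<omega> \<bullet> (K *v v \<omega>) \<partial>P)"
  proof -
    have "(\<integral>\<omega>. v \<omega> \<bullet> (K *v v \<omega>) \<partial>P) = (\<integral>\<omega>. (\<Sum>i\<in>UNIV. \<Sum>j\<in>UNIV. K$i$j * (v \<omega> $ j * v \<omega> $ i)) \<partial>P)"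
      by (simp add: quad_eq mult_ac)
    also have "\<dots> = (\<Sum>i\<in>UNIV. \<Sum>j\<in>UNIV. K$i$j * (\<integral>\<omega>. v \<omega> $ j * v \<omega> $ i \<partial>P))"
      using int by (simp add: integral_sum integrable_sum)
    finally show ?thesis
      by (simp add: trace_def matrix_matrix_mult_def mat_expect_def outer_def )
  qed
  also have "\<dots> \<ge> 0" using K unfolding psd_def by (simp add: integral_nonneg)
  finally show ?thesis .
qed

lemma mm_add_l: "(A::real^'n^'m) ** (B + C) = A ** B + A ** C"
  by (simp add: vec_eq_iff matrix_matrix_mult_def sum.distrib distrib_left)
lemma mm_add_r: "((A::real^'n^'m) + B) ** C = A ** C + B ** C"
  by (simp add: vec_eq_iff matrix_matrix_mult_def sum.distrib distrib_right)
lemma mm_diff_l: "(A::real^'n^'m) ** (B - C) = A ** B - A ** C"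
  by (simp add: vec_eq_iff matrix_matrix_mult_def sum_subtractf right_diff_distrib)
lemma mm_diff_r: "((A::real^'n^'m) - B) ** C = A ** C - B ** C"
  by (simp add: vec_eq_iff matrix_matrix_mult_def sum_subtractf left_diff_distrib)
lemma mm_scale_l: "(c *\<^sub>R (A::real^'n^'m)) ** B = c *\<^sub>R (A ** B)"
  by (simp add: vec_eq_iff matrix_matrix_mult_def sum_distrib_left mult.assoc)
lemma mm_scale_r: "(A::real^'n^'m) ** (c *\<^sub>R B) = c *\<^sub>R (A ** B)"
  by (simp add: vec_eq_iff matrix_matrix_mult_def sum_distrib_left mult_ac)
lemma mm_zero_l: "(0::real^'n^'m) ** B = 0"
  by (simp add: vec_eq_iff matrix_matrix_mult_def)
lemma mm_zero_r: "(A::real^'n^'m) ** (0::real^'k^'n) = 0"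
  by (simp add: vec_eq_iff matrix_matrix_mult_def)

lemmas mm_simps = mm_add_l mm_add_r mm_diff_l mm_diff_r mm_scale_l mm_scale_r matrix_mul_assoc

lemma trace_scale: "trace (c *\<^sub>R (A::real^'n^'n)) = c * trace A"
  by (simp add: trace_def sum_distrib_left)

lemma gram_entry: "gram X $ a $ b = (\<Sum>k\<in>UNIV. X$k$a * X$k$b)"
  by (simp add: gram_def matrix_matrix_mult_def transpose_def)

lemma mint_gram:
  assumes "\<And>i j a b. integrable M (\<lambda>\<omega>. Xq \<omega> $ i $ a * Xq \<omega> $ j $ b)"
  shows "mint M (\<lambda>\<omega>. gram (Xq \<omega>))"
  unfolding mint_def gram_entry using assms by auto

lemma GAG_entry: "(gram X ** A ** gram X) $ a $ b =
   (\<Sum>l\<in>UNIV. \<Sum>k\<in>UNIV. \<Sum>i\<in>UNIV. \<Sum>j\<in>UNIV. A$k$l * (X$i$a * X$i$k * X$j$l * X$j$b))"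
  by (simp add: matrix_matrix_mult_def gram_entry sum_distrib_left sum_distrib_right mult_ac)

lemma mint_GAG:
  assumes "\<And>i j k l a b c e. integrable M
                 (\<lambda>\<omega>. Xq \<omega> $ i $ a * Xq \<omega> $ j $ b * Xq \<omega> $ k $ c * Xq \<omega> $ l $ e)"
  shows "mint M (\<lambda>\<omega>. gram (Xq \<omega>) ** A ** gram (Xq \<omega>))"
  unfolding mint_def GAG_entry using assms by auto

lemma E_cG:
  fixes Xq :: "'a \<Rightarrow> real^'n^'b"
  assumes int2: "\<And>i j a b. integrable M (\<lambda>\<omega>. Xq \<omega> $ i $ a * Xq \<omega> $ j $ b)"
    and H_def: "\<And>i. H = mat_expect M (\<lambda>\<omega>. outer (Xq \<omega> $ i) (Xq \<omega> $ i))"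
  shows "mat_expect M (\<lambda>\<omega>. c *\<^sub>R gram (Xq \<omega>)) = (c * real CARD('b)) *\<^sub>R H"
proof -
  have Hab: "(\<integral>\<omega>. Xq \<omega> $ k $ a * Xq \<omega> $ k $ b \<partial>M) = H $ a $ b" for k a b
    using H_def[of k] by (simp add: mat_expect_def outer_def)
  have "(\<integral>\<omega>. c * (\<Sum>k\<in>UNIV. Xq \<omega> $ k $ a * Xq \<omega> $ k $ b) \<partial>M) = c * real CARD('b) * H $ a $ b" for a b
    using int2 by (simp add: integral_sum Hab)
  then show ?thesis by (simp add: vec_eq_iff mat_expect_def gram_entry)
qed

lemma IT_decomp:
  fixes Xq :: "'a \<Rightarrow> real^'n^'b"
  assumes probM: "prob_space M"
    and int2: "\<And>i j a b. integrable M (\<lambda>\<omega>. Xq \<omega> $ i $ a * Xq \<omega> $ j $ b)"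
    and int4: "\<And>i j k l a b c e. integrable M
                 (\<lambda>\<omega>. Xq \<omega> $ i $ a * Xq \<omega> $ j $ b * Xq \<omega> $ k $ c * Xq \<omega> $ l $ e)"
    and H_def: "\<And>i. H = mat_expect M (\<lambda>\<omega>. outer (Xq \<omega> $ i) (Xq \<omega> $ i))"
  shows "IT_op M Xq \<gamma> A = (mat 1 - \<gamma> *\<^sub>R H) ** A ** (mat 1 - \<gamma> *\<^sub>R H)
           + \<gamma>\<^sup>2 *\<^sub>R (M_op M Xq A - H ** A ** H)"
proof -
  define c where "c = \<gamma> / real CARD('b)"
  define G where "G = (\<lambda>\<omega>. gram (Xq \<omega>))"
  have Bpos: "real CARD('b) > 0" by simp
  have cc: "c * c = \<gamma>\<^sup>2 * (1 / (real CARD('b))\<^sup>2)" unfolding c_def by (simp add: power2_eq_square)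
  have eq: "(mat 1 - c *\<^sub>R G \<omega>) ** A ** (mat 1 - c *\<^sub>R G \<omega>) =
     A - (c *\<^sub>R G \<omega>) ** A - A ** (c *\<^sub>R G \<omega>) + \<gamma>\<^sup>2 *\<^sub>R ((1 / (real CARD('b))\<^sup>2) *\<^sub>R (G \<omega> ** A ** G \<omega>))" for \<omega>
    using cc by (simp add: mm_simps algebra_simps)
  have mG: "mint M G" unfolding G_def by (rule mint_gram[OF int2])
  have mGAG: "mint M (\<lambda>\<omega>. G \<omega> ** A ** G \<omega>)" unfolding G_def by (rule mint_GAG[OF int4])
  have mcG: "mint M (\<lambda>\<omega>. c *\<^sub>R G \<omega>)" by (rule mint_scale[OF mG])
  have fin: "finite_measure M" using probM by (simp add: prob_space_def)
  have EcG: "mat_expect M (\<lambda>\<omega>. c *\<^sub>R G \<omega>) = \<gamma> *\<^sub>R H"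
    unfolding G_def using E_cG[OF int2 H_def, of c] by (simp add: c_def)
  have "IT_op M Xq \<gamma> A = mat_expect M (\<lambda>\<omega>. A - (c *\<^sub>R G \<omega>) ** A - A ** (c *\<^sub>R G \<omega>) + \<gamma>\<^sup>2 *\<^sub>R ((1 / (real CARD('b))\<^sup>2) *\<^sub>R (G \<omega> ** A ** G \<omega>)))"
    unfolding IT_op_def using eq unfolding c_def G_def by simp
  also have "\<dots> = A - \<gamma> *\<^sub>R (H ** A) - \<gamma> *\<^sub>R (A ** H) + \<gamma>\<^sup>2 *\<^sub>R M_op M Xq A"
    apply (subst me_add)
      apply (intro mint_diff mint_const fin mint_rmul mint_lmul mcG)
     apply (intro mint_scale mGAG)
    apply (subst me_diff)
      apply (intro mint_diff mint_const fin mint_rmul mint_lmul mcG)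
     apply (intro mint_lmul mcG)
    apply (subst me_diff)
      apply (intro mint_const fin)
     apply (intro mint_rmul mcG)
    apply (simp only: me_rmul[OF mcG] me_lmul[OF mcG])
    apply (simp only: EcG me_const[OF probM])
    apply (simp add: mm_simps M_op_def G_def me_scale)
    done
  also have "\<dots> = (mat 1 - \<gamma> *\<^sub>R H) ** A ** (mat 1 - \<gamma> *\<^sub>R H) + \<gamma>\<^sup>2 *\<^sub>R (M_op M Xq A - H ** A ** H)"
    by (simp add: mm_simps algebra_simps power2_eq_square)
  finally show ?thesis .
qed

lemma transpose_gram: "transpose (gram X) = gram X"
  by (simp add: gram_def matrix_transpose_mul)

lemma IT_psd:
  fixes Xq :: "'a \<Rightarrow> real^'n^'b"
  assumes probM: "prob_space M"
    and int2: "\<And>i j a b. integrable M (\<lambda>\<omega>. Xq \<omega> $ i $ a * Xq \<omega> $ j $ b)"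
    and int4: "\<And>i j k l a b c e. integrable M
                 (\<lambda>\<omega>. Xq \<omega> $ i $ a * Xq \<omega> $ j $ b * Xq \<omega> $ k $ c * Xq \<omega> $ l $ e)"
    and A: "psd A"
  shows "psd (IT_op M Xq \<gamma> A)"
proof -
  define c where "c = \<gamma> / real CARD('b)"
  define G where "G = (\<lambda>\<omega>. gram (Xq \<omega>))"
  have eq: "(mat 1 - c *\<^sub>R G \<omega>) ** A ** (mat 1 - c *\<^sub>R G \<omega>) =
     A - c *\<^sub>R (G \<omega> ** A) - c *\<^sub>R (A ** G \<omega>) + (c * c) *\<^sub>R (G \<omega> ** A ** G \<omega>)" for \<omega>
    by (simp add: mm_simps algebra_simps)
  have mG: "mint M G" unfolding G_def by (rule mint_gram[OF int2])
  have mGAG: "mint M (\<lambda>\<omega>. G \<omega> ** A ** G \<omega>)" unfolding G_def by (rule mint_GAG[OF int4])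
  have fin: "finite_measure M" using probM by (simp add: prob_space_def)
  have mint: "mint M (\<lambda>\<omega>. (mat 1 - c *\<^sub>R G \<omega>) ** A ** (mat 1 - c *\<^sub>R G \<omega>))"
    unfolding eq
    by (intro mint_add mint_diff mint_scale mint_const fin mint_rmul mint_lmul mG mGAG)
  have ps: "psd ((mat 1 - c *\<^sub>R G \<omega>) ** A ** (mat 1 - c *\<^sub>R G \<omega>))" for \<omega>
  proof -
    have "transpose (mat 1 - c *\<^sub>R G \<omega>) = mat 1 - c *\<^sub>R G \<omega>"
      by (simp add: transpose_diff' transpose_scalar G_def transpose_gram)
    then show ?thesis using psd_congr[OF A, of "mat 1 - c *\<^sub>R G \<omega>"] by simp
  qed
  show ?thesis unfolding IT_op_def using me_psd[OF mint ps] unfolding c_def G_def .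
qed

lemma H2_le_M1:
  fixes Xq :: "'a \<Rightarrow> real^'n^'b"
  assumes probM: "prob_space M"
    and int2: "\<And>i j a b. integrable M (\<lambda>\<omega>. Xq \<omega> $ i $ a * Xq \<omega> $ j $ b)"
    and int4: "\<And>i j k l a b c e. integrable M
                 (\<lambda>\<omega>. Xq \<omega> $ i $ a * Xq \<omega> $ j $ b * Xq \<omega> $ k $ c * Xq \<omega> $ l $ e)"
    and H_def: "\<And>i. H = mat_expect M (\<lambda>\<omega>. outer (Xq \<omega> $ i) (Xq \<omega> $ i))"
    and Hs: "transpose H = H"
  shows "H ** H \<preceq>\<^sub>L M_op M Xq (mat 1)"
proof -
  define c where "c = 1 / real CARD('b)"
  define G where "G = (\<lambda>\<omega>. gram (Xq \<omega>))"
  have eq: "(c *\<^sub>R G \<omega> - H) ** mat 1 ** (c *\<^sub>R G \<omega> - H) =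
     (c * c) *\<^sub>R (G \<omega> ** mat 1 ** G \<omega>) - c *\<^sub>R (G \<omega> ** H) - H ** (c *\<^sub>R G \<omega>) + H ** H" for \<omega>
    by (simp add: mm_simps algebra_simps)
  have mG: "mint M G" unfolding G_def by (rule mint_gram[OF int2])
  have mcG: "mint M (\<lambda>\<omega>. c *\<^sub>R G \<omega>)" by (rule mint_scale[OF mG])
  have mGAG: "mint M (\<lambda>\<omega>. G \<omega> ** mat 1 ** G \<omega>)" unfolding G_def by (rule mint_GAG[OF int4])
  have fin: "finite_measure M" using probM by (simp add: prob_space_def)
  have mint: "mint M (\<lambda>\<omega>. (c *\<^sub>R G \<omega> - H) ** mat 1 ** (c *\<^sub>R G \<omega> - H))"
    unfolding eq
    by (intro mint_add mint_diff mint_scale mint_const fin mint_rmul mint_lmul mG mGAG)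
  have ps: "psd ((c *\<^sub>R G \<omega> - H) ** mat 1 ** (c *\<^sub>R G \<omega> - H))" for \<omega>
  proof -
    have "transpose (c *\<^sub>R G \<omega> - H) = c *\<^sub>R G \<omega> - H"
      by (simp add: transpose_diff' transpose_scalar G_def transpose_gram Hs)
    moreover have "psd (mat 1 :: real^'n^'n)" unfolding psd_def
      by (simp add: inner_ge_zero)
    ultimately show ?thesis using psd_congr[of "mat 1" "c *\<^sub>R G \<omega> - H"] by simp
  qed
  have EcG: "mat_expect M (\<lambda>\<omega>. c *\<^sub>R G \<omega>) = H"
    unfolding G_def using E_cG[OF int2 H_def, of c] by (simp add: c_def)
  have cc: "c * c = 1 / (real CARD('b))\<^sup>2" unfolding c_def by (simp add: power2_eq_square)
  have "mat_expect M (\<lambda>\<omega>. (c *\<^sub>R G \<omega> - H) ** mat 1 ** (c *\<^sub>R G \<omega> - H)) = M_op M Xq (mat 1) - H ** H"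
  proof -
    have m1: "mint M (\<lambda>\<omega>. (c * c) *\<^sub>R (G \<omega> ** mat 1 ** G \<omega>))" by (intro mint_scale mGAG)
    have m2: "mint M (\<lambda>\<omega>. c *\<^sub>R (G \<omega> ** H))" by (intro mint_scale mint_rmul mG)
    have m3: "mint M (\<lambda>\<omega>. H ** (c *\<^sub>R G \<omega>))" by (intro mint_lmul mcG)
    have m4: "mint M (\<lambda>\<omega>. H ** H)" by (intro mint_const fin)
    have e1: "mat_expect M (\<lambda>\<omega>. (c * c) *\<^sub>R (G \<omega> ** mat 1 ** G \<omega>)) = M_op M Xq (mat 1)"
      by (simp add: M_op_def G_def cc)
    have e2: "mat_expect M (\<lambda>\<omega>. c *\<^sub>R (G \<omega> ** H)) = H ** H"
      using me_rmul[OF mcG, of H] by (simp add: EcG mm_scale_l)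
    have e3: "mat_expect M (\<lambda>\<omega>. H ** (c *\<^sub>R G \<omega>)) = H ** H"
      using me_lmul[OF mcG, of H] by (simp add: EcG)
    have e4: "mat_expect M (\<lambda>\<omega>. H ** H) = H ** H" by (rule me_const[OF probM])
    show ?thesis unfolding eq
      by (simp only: me_add[OF mint_diff[OF mint_diff[OF m1 m2] m3] m4] me_diff[OF mint_diff[OF m1 m2] m3]
            me_diff[OF m1 m2] e1 e2 e3 e4) simp
  qed
  then show ?thesis using me_psd[OF mint ps] unfolding loewner_le_def by simp
qed

fun qpow :: "real^'n^'n \<Rightarrow> nat \<Rightarrow> real^'n^'n" where
  "qpow Q 0 = mat 1"
| "qpow Q (Suc k) = Q ** qpow Q k"

lemma qpow_comm: "qpow Q k ** Q = Q ** qpow Q k"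
  by (induction k) (simp_all add: matrix_mul_assoc[symmetric])

lemma qpow_Suc': "qpow Q (Suc k) = qpow Q k ** Q"
  by (simp add: qpow_comm)

lemma qpow_sym: "transpose Q = Q \<Longrightarrow> transpose (qpow Q k) = qpow Q k"
  by (induction k) (simp_all add: matrix_transpose_mul qpow_comm)

lemma qpow_comm_gen: "C ** Q = Q ** C \<Longrightarrow> C ** qpow Q k = qpow Q k ** C"
proof (induction k)
  case 0 then show ?case by simp
next
  case (Suc k)
  have "C ** (Q ** qpow Q k) = Q ** (C ** qpow Q k)"
    by (simp add: matrix_mul_assoc Suc.prems)
  also have "\<dots> = Q ** qpow Q k ** C" using Suc by (simp add: matrix_mul_assoc)
  finally show ?case by simp
qed

lemma ITt_pow: "(ITt_op H \<gamma> ^^ k) A = qpow (mat 1 - \<gamma> *\<^sub>R H) k ** A ** qpow (mat 1 - \<gamma> *\<^sub>R H) k"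
proof (induction k)
  case 0 then show ?case by simp
next
  case (Suc k)
  let ?Q = "mat 1 - \<gamma> *\<^sub>R H"
  have "(ITt_op H \<gamma> ^^ Suc k) A = ?Q ** (qpow ?Q k ** A ** qpow ?Q k) ** ?Q"
    by (simp only: funpow.simps comp_def Suc.IH) (simp add: ITt_op_def)
  also have "\<dots> = (?Q ** qpow ?Q k) ** A ** (qpow ?Q k ** ?Q)"
    by (simp add: matrix_mul_assoc)
  also have "\<dots> = qpow ?Q (Suc k) ** A ** qpow ?Q (Suc k)"
    by (simp add: qpow_comm)
  finally show ?case .
qed

lemma outer_psd: "psd (outer v v)"
proof -
  have "outer v v *v x = (v \<bullet> x) *\<^sub>R v" for x
    by (simp add: vec_eq_iff matrix_vector_mult_def outer_def inner_vec_def sum_distrib_left mult_ac)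
  then have "x \<bullet> (outer v v *v x) = (v \<bullet> x)\<^sup>2" for x
    by (simp add: power2_eq_square inner_commute)
  moreover have "transpose (outer v v) = outer v v"
    by (simp add: vec_eq_iff transpose_def outer_def mult.commute)
  ultimately show ?thesis unfolding psd_def by simp
qed

lemma trace_sum_mult: "trace (H ** (\<Sum>k<(t::nat). F k)) = (\<Sum>k<t. trace (H ** F k :: real^'n^'n))"
  by (induction t) (simp_all add: mm_add_l trace_add mm_zero_r trace_0[unfolded mat_0] )

lemma psd_sum: "(\<And>k. psd (F k)) \<Longrightarrow> psd (\<Sum>k<(t::nat). F k :: real^'n^'n)"
  by (induction t) (simp_all add: psd_add psd_zero)

lemma reindex: "(\<Sum>j<t. \<Sum>i<j. f i (j - Suc i)) = (\<Sum>i<t. \<Sum>k<t - Suc i. f i k :: real)"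
proof (induction t)
  case 0 then show ?case by simp
next
  case (Suc t)
  have "(\<Sum>i<Suc t. \<Sum>k<Suc t - Suc i. f i k) = (\<Sum>i<t. \<Sum>k<Suc t - Suc i. f i k)"
    by simp
  also have "\<dots> = (\<Sum>i<t. (\<Sum>k<t - Suc i. f i k) + f i (t - Suc i))"
  proof (rule sum.cong)
    fix i assume "i \<in> {..<t}"
    then have "Suc t - Suc i = Suc (t - Suc i)" by auto
    then show "(\<Sum>k<Suc t - Suc i. f i k) = (\<Sum>k<t - Suc i. f i k) + f i (t - Suc i)" by simp
  qed simp
  finally show ?case using Suc by (simp add: sum.distrib)
qed

lemma trace_sandwich: "trace (A ** Y ** A) = trace ((A ** A) ** (Y::real^'n^'n))"
  by (metis matrix_mul_assoc trace_mul_sym)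

lemma trace_sandwich_H: "trace (H ** (A ** Y ** A)) = trace ((A ** H ** A) ** (Y::real^'n^'n))"
  by (metis matrix_mul_assoc trace_mul_sym)

lemma pos_def_psd: "pos_def H \<Longrightarrow> psd H"
  unfolding pos_def_def psd_def by (metis inner_zero_left matrix_vector_mult_0_right order_le_less)

theorem lemmaD8:
  fixes M :: "'a measure" and Xq :: "'a \<Rightarrow> real^'n^'b"
    and P :: "'c measure" and eta0 :: "'c \<Rightarrow> real^'n"
    and H B0 :: "real^'n^'n" and \<alpha> \<gamma> :: real and t N :: nat
  assumes probM: "prob_space M"
    and indep: "prob_space.indep_vars M (\<lambda>_. borel) (\<lambda>i \<omega>. Xq \<omega> $ i) UNIV"
    and ident: "\<And>i j. distr M borel (\<lambda>\<omega>. Xq \<omega> $ i) = distr M borel (\<lambda>\<omega>. Xq \<omega> $ j)"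
    and int2: "\<And>i j a b. integrable M (\<lambda>\<omega>. Xq \<omega> $ i $ a * Xq \<omega> $ j $ b)"
    and int4: "\<And>i j k l a b c e. integrable M
                 (\<lambda>\<omega>. Xq \<omega> $ i $ a * Xq \<omega> $ j $ b * Xq \<omega> $ k $ c * Xq \<omega> $ l $ e)"
    and H_def: "\<And>i. H = mat_expect M (\<lambda>\<omega>. outer (Xq \<omega> $ i) (Xq \<omega> $ i))"
    and H_pd: "pos_def H"
    and fourth: "\<And>A. psd A \<Longrightarrow> M_op M Xq A \<preceq>\<^sub>L (\<alpha> * trace (H ** A)) *\<^sub>R H"
    and probP: "prob_space P"
    and intP: "\<And>i j. integrable P (\<lambda>\<omega>. eta0 \<omega> $ i * eta0 \<omega> $ j)"
    and B0_def: "B0 = mat_expect P (\<lambda>\<omega>. outer (eta0 \<omega>) (eta0 \<omega>))"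
    and gamma_pos: "0 < \<gamma>"
    and gamma_lt: "\<gamma> < 1 / (\<alpha> * trace H)"
    and t_range: "1 \<le> t" "t \<le> N"
  shows "M_op M Xq (S_sum M Xq \<gamma> B0 t) \<preceq>\<^sub>L
           ((\<alpha> * trace (B0 - (ITt_op H \<gamma> ^^ t) B0)) / (\<gamma> * (1 - \<gamma> * \<alpha> * trace H))) *\<^sub>R H"
proof -
  define Q where "Q = mat 1 - \<gamma> *\<^sub>R H"
  define qp where "qp = qpow Q"
  define BB where "BB = B_iter M Xq \<gamma> B0"
  define a where "a = (\<lambda>k. trace (H ** BB k))"
  define g where "g = \<gamma>\<^sup>2 * \<alpha>"
  have Hpsd: "psd H" by (rule pos_def_psd[OF H_pd])
  have Hs: "transpose H = H" using Hpsd unfolding psd_def by simp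
  have Qs: "transpose Q = Q" unfolding Q_def by (simp add: transpose_diff' transpose_scalar Hs)
  have qps: "transpose (qp k) = qp k" for k unfolding qp_def by (rule qpow_sym[OF Qs])
  have HQ: "H ** Q = Q ** H" unfolding Q_def by (simp add: mm_simps)
  have Hqp: "H ** qp k = qp k ** H" for k unfolding qp_def by (rule qpow_comm_gen[OF HQ])
  have trH: "0 \<le> trace H" by (rule trace_psd_nonneg[OF Hpsd])
  have aH: "\<alpha> * trace H > 0"
  proof (rule ccontr)
    assume "\<not> ?thesis"
    then have "1 / (\<alpha> * trace H) \<le> 0" by (simp add: divide_nonpos_nonneg divide_le_0_iff)
    then show False using gamma_pos gamma_lt by linarith
  qed
  have trHpos: "trace H > 0" using aH trH by (metis less_eq_real_def mult_zero_right less_irrefl)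
  have apos: "\<alpha> > 0" using aH trHpos by (simp add: zero_less_mult_iff)
  have gaH: "\<gamma> * \<alpha> * trace H < 1"
    using gamma_lt aH by (simp add: field_simps)
  have gnn: "0 \<le> g" unfolding g_def using apos by simp
  obtain i0 :: 'b where True by blast
  have Hexp: "H = mat_expect M (\<lambda>\<omega>. outer (Xq \<omega> $ i0) (Xq \<omega> $ i0))" by (rule H_def)
  have T_nonneg: "0 \<le> trace (H ** Z)" if "psd Z" for Z
  proof -
    have "0 \<le> trace (Z ** H)" unfolding Hexp
      by (rule trace_me_outer_nonneg[OF that]) (rule int2)
    then show ?thesis by (metis trace_mul_sym)
  qed
  have B0psd: "psd B0" unfolding B0_def
    by (rule me_psd) (simp add: mint_def outer_def intP, rule outer_psd)
  have BBSuc: "BB (Suc k) = IT_op M Xq \<gamma> (BB k)" for k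
    unfolding BB_def B_iter_def by simp
  have BBpsd: "psd (BB k)" for k
  proof (induction k)
    case 0 then show ?case using B0psd by (simp add: BB_def B_iter_def)
  next
    case (Suc k) then show ?case unfolding BBSuc by (rule IT_psd[OF probM int2 int4])
  qed
  have a_nn: "0 \<le> a k" for k unfolding a_def by (rule T_nonneg[OF BBpsd])
  have step: "trace (H ** (qp m ** BB (Suc j) ** qp m)) \<le>
      trace (H ** (qp (Suc m) ** BB j ** qp (Suc m))) + g * a j * trace (H ** (qp m ** H ** qp m))" for m j
  proof -
    define D where "D = \<gamma>\<^sup>2 *\<^sub>R ((\<alpha> * a j) *\<^sub>R H - M_op M Xq (BB j)) + \<gamma>\<^sup>2 *\<^sub>R (H ** BB j ** H)"
    have Dpsd: "psd D" unfolding D_def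
      apply (intro psd_add psd_scale)
      using fourth[OF BBpsd[of j]] unfolding loewner_le_def a_def apply simp
      apply simp
      using psd_congr[OF BBpsd[of j], of H] Hs apply simp
      apply simp
      done
    have eq: "BB (Suc j) = Q ** BB j ** Q + (g * a j) *\<^sub>R H - D"
      unfolding BBSuc IT_decomp[OF probM int2 int4 H_def] D_def Q_def g_def
      by (simp add: algebra_simps)
    have "qp m ** BB (Suc j) ** qp m = qp (Suc m) ** BB j ** qp (Suc m) + (g * a j) *\<^sub>R (qp m ** H ** qp m)
        - qp m ** D ** qp m"
    proof -
      have "qp m ** (Q ** BB j ** Q) ** qp m = (qp m ** Q) ** BB j ** (Q ** qp m)"
        by (simp add: matrix_mul_assoc)
      also have "\<dots> = qp (Suc m) ** BB j ** qp (Suc m)"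
        unfolding qp_def by (simp add: qpow_comm)
      finally show ?thesis unfolding eq by (simp add: mm_simps)
    qed
    then have "trace (H ** (qp m ** BB (Suc j) ** qp m)) = trace (H ** (qp (Suc m) ** BB j ** qp (Suc m)))
       + g * a j * trace (H ** (qp m ** H ** qp m)) - trace (H ** (qp m ** D ** qp m))"
      by (simp add: mm_simps trace_add trace_sub trace_scale)
    moreover have "0 \<le> trace (H ** (qp m ** D ** qp m))"
      using T_nonneg psd_congr[OF Dpsd, of "qp m"] qps by simp
    ultimately show ?thesis by simp
  qed
  have unroll: "\<forall>m. trace (H ** (qp m ** BB j ** qp m)) \<le> trace (H ** (qp (m + j) ** B0 ** qp (m + j)))
     + g * (\<Sum>i<j. a i * trace (H ** (qp (m + j - Suc i) ** H ** qp (m + j - Suc i))))" for j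
  proof (induction j)
    case 0 then show ?case by (simp add: BB_def B_iter_def)
  next
    case (Suc j)
    show ?case
    proof
      fix m
      have "trace (H ** (qp m ** BB (Suc j) ** qp m)) \<le>
          trace (H ** (qp (Suc m) ** BB j ** qp (Suc m))) + g * a j * trace (H ** (qp m ** H ** qp m))"
        by (rule step)
      also have "\<dots> \<le> trace (H ** (qp (Suc m + j) ** B0 ** qp (Suc m + j)))
     + g * (\<Sum>i<j. a i * trace (H ** (qp (Suc m + j - Suc i) ** H ** qp (Suc m + j - Suc i))))
     + g * a j * trace (H ** (qp m ** H ** qp m))"
        using spec[OF Suc.IH, of "Suc m"] by simp
      also have "\<dots> = trace (H ** (qp (m + Suc j) ** B0 ** qp (m + Suc j)))
     + g * (\<Sum>i<Suc j. a i * trace (H ** (qp (m + Suc j - Suc i) ** H ** qp (m + Suc j - Suc i))))"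
        by (simp add: distrib_left)
      finally show "trace (H ** (qp m ** BB (Suc j) ** qp m)) \<le> trace (H ** (qp (m + Suc j) ** B0 ** qp (m + Suc j)))
     + g * (\<Sum>i<Suc j. a i * trace (H ** (qp (m + Suc j - Suc i) ** H ** qp (m + Suc j - Suc i))))" .
    qed
  qed
  have I_psd: "psd (mat 1 :: real^'n^'n)" unfolding psd_def by (simp add: inner_ge_zero)
  have Hg: "psd (H - \<gamma> *\<^sub>R (H ** H))"
  proof -
    have f1: "psd ((\<alpha> * trace H) *\<^sub>R H - M_op M Xq (mat 1))"
      using fourth[OF I_psd] unfolding loewner_le_def by simp
    have f2: "psd (M_op M Xq (mat 1) - H ** H)"
      using H2_le_M1[OF probM int2 int4 H_def Hs] unfolding loewner_le_def .
    have f3: "psd ((\<alpha> * trace H) *\<^sub>R H - H ** H)" using psd_add[OF f1 f2] by simp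
    have "H - \<gamma> *\<^sub>R (H ** H) = \<gamma> *\<^sub>R ((\<alpha> * trace H) *\<^sub>R H - H ** H) + (1 - \<gamma> * \<alpha> * trace H) *\<^sub>R H"
      by (simp add: algebra_simps)
    then show ?thesis using psd_add[OF psd_scale[OF f3] psd_scale[OF Hpsd]] gamma_pos gaH by simp
  qed
  have tele: "\<gamma> * trace (H ** (qp k ** Y ** qp k)) \<le> trace (qp k ** Y ** qp k) - trace (qp (Suc k) ** Y ** qp (Suc k))"
    if Y: "\<And>K. psd K \<Longrightarrow> 0 \<le> trace (K ** Y)" for Y k
  proof -
    have sq: "qp (Suc k) ** qp (Suc k) = qp k ** (Q ** Q) ** qp k"
    proof -
      have "qp (Suc k) ** qp (Suc k) = qp k ** Q ** (Q ** qp k)"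
        unfolding qp_def by (simp add: qpow_comm)
      then show ?thesis by (simp add: matrix_mul_assoc)
    qed
    have QQ: "Q ** Q = mat 1 - \<gamma> *\<^sub>R H - \<gamma> *\<^sub>R H + \<gamma>\<^sup>2 *\<^sub>R (H ** H)"
      unfolding Q_def by (simp add: mm_simps algebra_simps power2_eq_square)
    have ident: "qp k ** qp k - qp (Suc k) ** qp (Suc k) - \<gamma> *\<^sub>R (qp k ** H ** qp k)
        = \<gamma> *\<^sub>R (qp k ** (H - \<gamma> *\<^sub>R (H ** H)) ** qp k)"
    proof -
      have e1: "qp k ** (Q ** Q) ** qp k = qp k ** qp k - \<gamma> *\<^sub>R (qp k ** H ** qp k) - \<gamma> *\<^sub>R (qp k ** H ** qp k)
           + \<gamma>\<^sup>2 *\<^sub>R (qp k ** (H ** H) ** qp k)"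
        unfolding QQ by (simp only: mm_simps matrix_mul_rid)
      have e2: "qp k ** (H - \<gamma> *\<^sub>R (H ** H)) ** qp k = qp k ** H ** qp k - \<gamma> *\<^sub>R (qp k ** (H ** H) ** qp k)"
        by (simp add: mm_simps)
      have gen: "A1 - (A1 - c *\<^sub>R A2 - c *\<^sub>R A2 + c\<^sup>2 *\<^sub>R A3) - c *\<^sub>R A2 = c *\<^sub>R (A2 - c *\<^sub>R A3)"
        for A1 A2 A3 :: "real^'n^'n" and c :: real
        by (simp add: algebra_simps power2_eq_square)
      show ?thesis unfolding sq e1 e2 by (rule gen)
    qed
    have "0 \<le> trace ((qp k ** (H - \<gamma> *\<^sub>R (H ** H)) ** qp k) ** Y)"
      using Y psd_congr[OF Hg, of "qp k"] qps by simp
    then have "0 \<le> trace ((qp k ** qp k - qp (Suc k) ** qp (Suc k) - \<gamma> *\<^sub>R (qp k ** H ** qp k)) ** Y)"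
      unfolding ident using gamma_pos by (simp add: mm_simps trace_scale)
    then have h: "0 \<le> trace ((qp k ** qp k) ** Y) - trace ((qp (Suc k) ** qp (Suc k)) ** Y) - \<gamma> * trace ((qp k ** H ** qp k) ** Y)"
      by (simp only: mm_diff_r mm_scale_l trace_sub trace_scale)
    have t1: "trace (qp k ** Y ** qp k) = trace ((qp k ** qp k) ** Y)" by (rule trace_sandwich)
    have t2: "trace (qp (Suc k) ** Y ** qp (Suc k)) = trace ((qp (Suc k) ** qp (Suc k)) ** Y)" by (rule trace_sandwich)
    have t3: "trace (H ** (qp k ** Y ** qp k)) = trace ((qp k ** H ** qp k) ** Y)" by (rule trace_sandwich_H)
    show ?thesis unfolding t1 t2 t3 using h by simp
  qed
  have tsum: "\<gamma> * (\<Sum>k<n. trace (H ** (qp k ** Y ** qp k))) \<le> trace Y - trace (qp n ** Y ** qp n)"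
    if Y: "\<And>K. psd K \<Longrightarrow> 0 \<le> trace (K ** Y)" for Y n
  proof (induction n)
    case 0 then show ?case by (simp add: qp_def)
  next
    case (Suc n) then show ?case using tele[OF Y, of n] by (simp add: distrib_left)
  qed
  have YH: "0 \<le> trace (K ** H)" if "psd K" for K
    unfolding Hexp by (rule trace_me_outer_nonneg[OF that]) (rule int2)
  have YB: "0 \<le> trace (K ** B0)" if "psd K" for K
    unfolding B0_def by (rule trace_me_outer_nonneg[OF that]) (rule intP)
  define b where "b = (\<lambda>k. trace (H ** (qp k ** H ** qp k)))"
  define d where "d = (\<lambda>k. trace (H ** (qp k ** B0 ** qp k)))"
  have bsum: "\<gamma> * (\<Sum>k<n. b k) \<le> trace H" for n
  proof -
    have "0 \<le> trace (qp n ** H ** qp n)"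
      using trace_psd_nonneg psd_congr[OF Hpsd, of "qp n"] qps by simp
    then show ?thesis using tsum[OF YH, of n] unfolding b_def by simp
  qed
  have bsum': "(\<Sum>k<n. b k) \<le> trace H / \<gamma>" for n
    using bsum[of n] gamma_pos by (simp add: field_simps)
  define s where "s = (\<Sum>j<t. a j)"
  have aj: "a j \<le> d j + g * (\<Sum>i<j. a i * b (j - Suc i))" for j
    using spec[OF unroll[of j], of 0] unfolding a_def b_def d_def by (simp add: qp_def)
  have "s \<le> (\<Sum>j<t. d j) + g * (\<Sum>j<t. \<Sum>i<j. a i * b (j - Suc i))"
    unfolding s_def using sum_mono[of "{..<t}" a "\<lambda>j. d j + g * (\<Sum>i<j. a i * b (j - Suc i))", OF aj]
    by (simp add: sum.distrib sum_distrib_left)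
  also have "(\<Sum>j<t. \<Sum>i<j. a i * b (j - Suc i)) = (\<Sum>i<t. a i * (\<Sum>k<t - Suc i. b k))"
    using reindex[where t=t and f="\<lambda>i k. a i * b k"] by (simp add: sum_distrib_left)
  also have "\<dots> \<le> (\<Sum>i<t. a i * (trace H / \<gamma>))"
    by (intro sum_mono mult_left_mono bsum' a_nn)
  also have "\<dots> = s * (trace H / \<gamma>)" unfolding s_def by (rule sum_distrib_right[symmetric])
  finally have s1: "s \<le> (\<Sum>j<t. d j) + g * (s * (trace H / \<gamma>))"
    using gnn by (simp add: mult_left_mono)
  have dsum: "\<gamma> * (\<Sum>j<t. d j) \<le> trace B0 - trace (qp t ** B0 ** qp t)"
    using tsum[OF YB, of t] unfolding d_def by simp
  have s2: "\<gamma> * (1 - \<gamma> * \<alpha> * trace H) * s \<le> trace B0 - trace (qp t ** B0 ** qp t)"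
  proof -
    have "\<gamma> * s \<le> \<gamma> * (\<Sum>j<t. d j) + \<gamma> * (g * (s * (trace H / \<gamma>)))"
      using mult_left_mono[OF s1, of \<gamma>] gamma_pos by (simp add: distrib_left)
    also have "\<gamma> * (g * (s * (trace H / \<gamma>))) = \<gamma> * (\<gamma> * \<alpha> * trace H) * s"
      unfolding g_def using gamma_pos by (simp add: field_simps power2_eq_square)
    finally show ?thesis using dsum by (simp add: algebra_simps)
  qed
  have Ceq: "(ITt_op H \<gamma> ^^ t) B0 = qp t ** B0 ** qp t"
    unfolding qp_def Q_def by (rule ITt_pow)
  have Seq: "S_sum M Xq \<gamma> B0 t = (\<Sum>k<t. BB k)" unfolding S_sum_def BB_def ..
  have Spsd: "psd (S_sum M Xq \<gamma> B0 t)" unfolding Seq by (rule psd_sum[OF BBpsd])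
  have trS: "trace (H ** S_sum M Xq \<gamma> B0 t) = s"
    unfolding Seq s_def a_def by (rule trace_sum_mult)
  define R where "R = (\<alpha> * trace (B0 - (ITt_op H \<gamma> ^^ t) B0)) / (\<gamma> * (1 - \<gamma> * \<alpha> * trace H))"
  have den: "\<gamma> * (1 - \<gamma> * \<alpha> * trace H) > 0" using gamma_pos gaH by simp
  have "\<alpha> * s \<le> R"
  proof -
    have "s \<le> (trace B0 - trace (qp t ** B0 ** qp t)) / (\<gamma> * (1 - \<gamma> * \<alpha> * trace H))"
      using s2 den by (simp add: field_simps)
    then have "\<alpha> * s \<le> \<alpha> * ((trace B0 - trace (qp t ** B0 ** qp t)) / (\<gamma> * (1 - \<gamma> * \<alpha> * trace H)))"
      using apos by (intro mult_left_mono) auto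
    then show ?thesis unfolding R_def Ceq trace_sub by (simp only: times_divide_eq_right)
  qed
  have f: "psd ((\<alpha> * s) *\<^sub>R H - M_op M Xq (S_sum M Xq \<gamma> B0 t))"
    using fourth[OF Spsd] unfolding loewner_le_def trS .
  have "R *\<^sub>R H - M_op M Xq (S_sum M Xq \<gamma> B0 t) =
      (R - \<alpha> * s) *\<^sub>R H + ((\<alpha> * s) *\<^sub>R H - M_op M Xq (S_sum M Xq \<gamma> B0 t))"
    by (simp add: algebra_simps)
  moreover have "psd ((R - \<alpha> * s) *\<^sub>R H + ((\<alpha> * s) *\<^sub>R H - M_op M Xq (S_sum M Xq \<gamma> B0 t)))"
    using psd_add[OF psd_scale[OF Hpsd] f] \<open>\<alpha> * s \<le> R\<close> by simp
  ultimately have "psd (R *\<^sub>R H - M_op M Xq (S_sum M Xq \<gamma> B0 t))" by metis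
  then show ?thesis unfolding loewner_le_def R_def .
qed

end
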